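(* Let $m,n\in\mathbb{N}$ and for $1\le\ell\le m$ let $r_{\ell},s_{\ell}$ be nonnegative integers with $s_\ell+1\ge r_\ell$, and let $a_{1,\ell},\dots,a_{r_{\ell},\ell},b_{1,\ell},\dots,b_{s_{\ell},\ell}\in\mathbb{C}$ be such that \[ \frac{(a_{1,\ell})_{N}\cdots(a_{r_{\ell},\ell})_{N}}{(b_{1,\ell})_{N}\cdots(b_{s_{\ell},\ell})_{N}}\ge0\quad\text{for all }N\in\mathbb{N}_{0}. \] Let $z_{j,\ell}\in\mathbb{C}$ ($1\le j\le n$), where if $s_{\ell}+1=r_{\ell}$ we assume $|z_{j,\ell}|<1$ for all $j$. Then the $n\times n$ matrix \[ \left(\prod_{\ell=1}^{m}{}_{r_{\ell}}F_{s_{\ell}}\left(\begin{array}{c}a_{1,\ell},\dots,a_{r_{\ell},\ell}\\ b_{1,\ell},\dots,b_{s_{\ell},\ell}\end{array}\bigg|\,z_{j,\ell}\overline{z_{k,\ell}}\right)\right)_{j,k=1}^{n} \] is positive semidefinite.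
   Context: $(a)_N=\Gamma(a+N)/\Gamma(a)=a(a+1)\cdots(a+N-1)$. For $s+1\ge r$, ${}_{r}F_{s}\left(\begin{array}{c}a_{1},\dots,a_{r}\\ b_{1},\dots,b_{s}\end{array}\big|z\right)=\sum_{N=0}^{\infty}\frac{(a_1)_N\cdots(a_r)_N}{N!\,(b_1)_N\cdots(b_s)_N}z^{N}$, for $z\in\mathbb{C}$ if $s+1>r$ and $|z|<1$ if $s+1=r$. A complex matrix $A=(a_{j,k})$ is positive semidefinite if $\sum_{j,k}a_{j,k}w_j\overline{w_k}\ge0$ for all complex $w_j$. *)

theory Defs
  imports Complex_Main
begin

definition hypF :: "nat \<Rightarrow> nat \<Rightarrow> (nat \<Rightarrow> complex) \<Rightarrow> (nat \<Rightarrow> complex) \<Rightarrow> complex \<Rightarrow> complex" where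
  "hypF r s a b z =
     (\<Sum>N. (\<Prod>i=1..r. pochhammer (a i) N) / (fact N * (\<Prod>i=1..s. pochhammer (b i) N)) * z ^ N)"

definition nonneg_complex :: "complex \<Rightarrow> bool" where
  "nonneg_complex x \<longleftrightarrow> x \<in> \<real> \<and> 0 \<le> Re x"

definition psd_matrix :: "nat \<Rightarrow> (nat \<Rightarrow> nat \<Rightarrow> complex) \<Rightarrow> bool" where
  "psd_matrix n A \<longleftrightarrow>
     (\<forall>w :: nat \<Rightarrow> complex. nonneg_complex (\<Sum>j=1..n. \<Sum>k=1..n. A j k * w j * cnj (w k)))"

end

theory Submission
  imports Defs "HOL-Library.FuncSet"
begin

lemma nonneg_complex_iff: "nonneg_complex x \<longleftrightarrow> (\<exists>t\<ge>0. x = complex_of_real t)"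
  unfolding nonneg_complex_def
  by (metis Reals_cases Reals_of_real Re_complex_of_real)

lemma psd_gram:
  assumes "finite P" "\<And>p. p \<in> P \<Longrightarrow> c p \<ge> 0"
  shows "psd_matrix n (\<lambda>j k. \<Sum>p\<in>P. complex_of_real (c p) * u p j * cnj (u p k))"
proof -
  { fix w :: "nat \<Rightarrow> complex"
    define S where "S p = (\<Sum>j=1..n. u p j * w j)" for p
    have "(\<Sum>j=1..n. \<Sum>k=1..n. (\<Sum>p\<in>P. complex_of_real (c p) * u p j * cnj (u p k)) * w j * cnj (w k))
        = (\<Sum>p\<in>P. \<Sum>j=1..n. \<Sum>k=1..n. complex_of_real (c p) * (u p j * w j) * cnj (u p k * w k))"
    proof -
      have "(\<Sum>j=1..n. \<Sum>k=1..n. (\<Sum>p\<in>P. complex_of_real (c p) * u p j * cnj (u p k)) * w j * cnj (w k))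
          = (\<Sum>j=1..n. \<Sum>k=1..n. \<Sum>p\<in>P. complex_of_real (c p) * (u p j * w j) * cnj (u p k * w k))"
        by (simp add: sum_distrib_right sum_distrib_left mult_ac)
      also have "\<dots> = (\<Sum>j=1..n. \<Sum>p\<in>P. \<Sum>k=1..n. complex_of_real (c p) * (u p j * w j) * cnj (u p k * w k))"
        by (rule sum.cong[OF refl], rule sum.swap)
      also have "\<dots> = (\<Sum>p\<in>P. \<Sum>j=1..n. \<Sum>k=1..n. complex_of_real (c p) * (u p j * w j) * cnj (u p k * w k))"
        by (rule sum.swap)
      finally show ?thesis .
    qed
    also have "\<dots> = (\<Sum>p\<in>P. complex_of_real (c p) * (S p * cnj (S p)))"
      unfolding S_def by (simp add: sum_distrib_left sum_distrib_right mult_ac) (rule sum.cong[OF refl], rule sum.swap)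
    also have "\<dots> = complex_of_real (\<Sum>p\<in>P. c p * (norm (S p))^2)"
      by (simp add: complex_norm_square[symmetric])
    finally have "nonneg_complex (\<Sum>j=1..n. \<Sum>k=1..n. (\<Sum>p\<in>P. complex_of_real (c p) * u p j * cnj (u p k)) * w j * cnj (w k))"
      unfolding nonneg_complex_iff
    proof -
      assume eq: "(\<Sum>j=1..n. \<Sum>k=1..n. (\<Sum>p\<in>P. complex_of_real (c p) * u p j * cnj (u p k)) * w j * cnj (w k)) = complex_of_real (\<Sum>p\<in>P. c p * (norm (S p))^2)"
      have "(\<Sum>p\<in>P. c p * (norm (S p))^2) \<ge> 0" using assms by (auto intro!: sum_nonneg)
      thus "\<exists>t\<ge>0. (\<Sum>j=1..n. \<Sum>k=1..n. (\<Sum>p\<in>P. complex_of_real (c p) * u p j * cnj (u p k)) * w j * cnj (w k)) = complex_of_real t"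
        using eq by blast
    qed
  }
  thus ?thesis unfolding psd_matrix_def by blast
qed

lemma psd_limit:
  assumes "\<And>j k. j \<in> {1..n} \<Longrightarrow> k \<in> {1..n} \<Longrightarrow> (\<lambda>M. f M j k) \<longlonglongrightarrow> A j k"
    and "\<And>M. psd_matrix n (f M)"
  shows "psd_matrix n A"
  unfolding psd_matrix_def
proof
  fix w :: "nat \<Rightarrow> complex"
  let ?Q = "\<lambda>M. \<Sum>j=1..n. \<Sum>k=1..n. f M j k * w j * cnj (w k)"
  have lim: "?Q \<longlonglongrightarrow> (\<Sum>j=1..n. \<Sum>k=1..n. A j k * w j * cnj (w k))"
    by (intro tendsto_sum tendsto_mult tendsto_const assms(1)) auto
  have nn: "\<And>M. Im (?Q M) = 0 \<and> Re (?Q M) \<ge> 0"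
    using assms(2) unfolding psd_matrix_def nonneg_complex_def by (meson complex_is_Real_iff)
  have "(\<lambda>M. Im (?Q M)) \<longlonglongrightarrow> Im (\<Sum>j=1..n. \<Sum>k=1..n. A j k * w j * cnj (w k))"
    using lim by (rule tendsto_Im)
  hence i0: "Im (\<Sum>j=1..n. \<Sum>k=1..n. A j k * w j * cnj (w k)) = 0"
    using nn LIMSEQ_unique[OF _ tendsto_const] by (metis (no_types, lifting) ext)
  have "(\<lambda>M. Re (?Q M)) \<longlonglongrightarrow> Re (\<Sum>j=1..n. \<Sum>k=1..n. A j k * w j * cnj (w k))"
    using lim by (rule tendsto_Re)
  hence "Re (\<Sum>j=1..n. \<Sum>k=1..n. A j k * w j * cnj (w k)) \<ge> 0"
    using nn by (meson LIMSEQ_le_const)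
  thus "nonneg_complex (\<Sum>j=1..n. \<Sum>k=1..n. A j k * w j * cnj (w k))"
    using i0 unfolding nonneg_complex_def by (simp add: complex_is_Real_iff)
qed

lemma psd_partial:
  assumes "finite L" "\<And>l N. l \<in> L \<Longrightarrow> nonneg_complex (d l N)"
  shows "psd_matrix n (\<lambda>j k. \<Prod>l\<in>L. \<Sum>N<M. d l N * (x j l * cnj (x k l))^N)"
proof -
  obtain c where c: "\<And>l N. l \<in> L \<Longrightarrow> c l N \<ge> 0 \<and> d l N = complex_of_real (c l N)"
    using assms(2) unfolding nonneg_complex_iff by metis
  have eq: "(\<Prod>l\<in>L. \<Sum>N<M. d l N * (x j l * cnj (x k l))^N)
      = (\<Sum>g\<in>PiE L (\<lambda>_. {..<M}). complex_of_real (\<Prod>l\<in>L. c l (g l)) * (\<Prod>l\<in>L. x j l ^ g l) * cnj (\<Prod>l\<in>L. x k l ^ g l))" for j k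
  proof -
    have "(\<Prod>l\<in>L. \<Sum>N<M. d l N * (x j l * cnj (x k l))^N)
        = (\<Sum>g\<in>PiE L (\<lambda>_. {..<M}). \<Prod>l\<in>L. d l (g l) * (x j l * cnj (x k l))^(g l))"
      by (rule prod_sum_PiE) (auto simp: assms(1))
    also have "\<dots> = (\<Sum>g\<in>PiE L (\<lambda>_. {..<M}). complex_of_real (\<Prod>l\<in>L. c l (g l)) * (\<Prod>l\<in>L. x j l ^ g l) * cnj (\<Prod>l\<in>L. x k l ^ g l))"
      by (intro sum.cong refl) (simp add: c prod.distrib power_mult_distrib)
    finally show ?thesis .
  qed
  show ?thesis unfolding eq
    by (rule psd_gram) (auto simp: assms(1) finite_PiE c intro!: prod_nonneg)
qed


lemma inv_suc_lim: "(\<lambda>N. inverse (of_nat N + 1 :: complex)) \<longlonglongrightarrow> 0"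
proof -
  have "(\<lambda>N. inverse (of_nat (Suc N) :: complex)) \<longlonglongrightarrow> 0"
    using lim_inverse_n by (rule LIMSEQ_Suc)
  thus ?thesis by (simp add: add.commute)
qed

lemma ratio_one_lim: "(\<lambda>N. (c + of_nat N) / (of_nat N + 1 :: complex)) \<longlonglongrightarrow> 1"
proof -
  have eq: "(c + of_nat N) / (of_nat N + 1 :: complex) = 1 + (c - 1) * inverse (of_nat N + 1)" for N
  proof -
    have "(of_nat N + 1 :: complex) \<noteq> 0"
      by (metis of_nat_Suc of_nat_eq_0_iff add.commute nat.distinct(1))
    thus ?thesis by (simp add: field_simps)
  qed
  have "(\<lambda>N. 1 + (c - 1) * inverse (of_nat N + 1 :: complex)) \<longlonglongrightarrow> 1 + (c - 1) * 0"
    by (intro tendsto_intros inv_suc_lim)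
  thus ?thesis unfolding eq by simp
qed

lemma aux: fixes x PA PB :: complex
  assumes "x \<noteq> 0" "PB \<noteq> 0" "x^(s+1) = x^r * x^e"
  shows "PA/(PB*x) = (PA/x^r)/(PB/x^s) * inverse x ^ e"
proof -
  have "(PA/x^r)/(PB/x^s) * inverse x ^ e = PA * x^s / (PB * (x^r * x^e))"
    using assms by (simp add: field_simps power_inverse)
  also have "\<dots> = PA * x^s / (PB * (x^s * x))" using assms(3) by (simp add: mult.commute)
  also have "\<dots> = PA/(PB*x)" using assms by (simp add: field_simps)
  finally show ?thesis by simp
qed

lemma hyp_summable:
  fixes a b :: "nat \<Rightarrow> complex" and w :: complex
  assumes rs: "r \<le> s + 1"
    and bnz: "\<And>N i. 1 \<le> i \<Longrightarrow> i \<le> s \<Longrightarrow> pochhammer (b i) N \<noteq> 0"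
    and wb: "r = s + 1 \<Longrightarrow> norm w < 1"
  shows "summable (\<lambda>N. (\<Prod>i=1..r. pochhammer (a i) N) / (fact N * (\<Prod>i=1..s. pochhammer (b i) N)) * w^N)"
proof -
  define t where "t N = (\<Prod>i=1..r. pochhammer (a i) N) / (fact N * (\<Prod>i=1..s. pochhammer (b i) N)) * w^N" for N
  define g where "g N = (\<Prod>i=1..r. (a i + of_nat N)) / ((\<Prod>i=1..s. (b i + of_nat N)) * (of_nat N + 1))" for N
  have Nz: "(of_nat N + 1 :: complex) \<noteq> 0" for N
    by (metis of_nat_Suc of_nat_eq_0_iff add.commute nat.distinct(1))
  have bz: "b i + of_nat N \<noteq> 0" if "1 \<le> i" "i \<le> s" for i N
    using bnz[OF that, of "Suc N"] by (simp add: pochhammer_Suc)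
  have pbz: "(\<Prod>i=1..s. pochhammer (b i) N) \<noteq> 0" for N
    using bnz by (simp add: prod_zero_iff)
  have bbz: "(\<Prod>i=1..s. (b i + of_nat N)) \<noteq> 0" for N
    using bz by (simp add: prod_zero_iff)
  have step: "t (Suc N) = t N * (g N * w)" for N
  proof -
    have "t (Suc N) = ((\<Prod>i=1..r. pochhammer (a i) N) * (\<Prod>i=1..r. (a i + of_nat N))) /
        (fact N * (of_nat N + 1) * ((\<Prod>i=1..s. pochhammer (b i) N) * (\<Prod>i=1..s. (b i + of_nat N)))) * (w^N * w)"
      unfolding t_def pochhammer_Suc prod.distrib fact_Suc by (simp add: mult_ac)
    also have "\<dots> = t N * (g N * w)"
      unfolding t_def g_def using Nz pbz bbz by (simp add: field_simps)
    finally show ?thesis .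
  qed
  define L where "L = (if r = s + 1 then 1 else (0::complex))"
  have gL: "g \<longlonglongrightarrow> L"
  proof -
    define A where "A N = (\<Prod>i=1..r. (a i + of_nat N) / (of_nat N + 1))" for N
    define B where "B N = (\<Prod>i=1..s. (b i + of_nat N) / (of_nat N + 1))" for N
    define e where "e = s + 1 - r"
    have geq: "g N = A N / B N * inverse (of_nat N + 1) ^ e" for N
    proof -
      have "A N = (\<Prod>i=1..r. (a i + of_nat N)) / (of_nat N + 1) ^ r"
        unfolding A_def by (simp add: prod_dividef)
      moreover have "B N = (\<Prod>i=1..s. (b i + of_nat N)) / (of_nat N + 1) ^ s"
        unfolding B_def by (simp add: prod_dividef)
      moreover have "(of_nat N + 1 :: complex) ^ (s + 1) = (of_nat N + 1) ^ r * (of_nat N + 1) ^ e"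
        unfolding e_def using rs by (simp add: power_add[symmetric])
      ultimately show ?thesis unfolding g_def using Nz[of N] bbz[of N]
        by (metis aux)
    qed
    have "A \<longlonglongrightarrow> (\<Prod>i=1..r. 1)"
      unfolding A_def by (intro tendsto_prod ratio_one_lim)
    moreover have "B \<longlonglongrightarrow> (\<Prod>i=1..s. 1)"
      unfolding B_def by (intro tendsto_prod ratio_one_lim)
    moreover have "(\<lambda>N. inverse (of_nat N + 1 :: complex) ^ e) \<longlonglongrightarrow> 0 ^ e"
      by (intro tendsto_power inv_suc_lim)
    ultimately have "(\<lambda>N. A N / B N * inverse (of_nat N + 1) ^ e) \<longlonglongrightarrow> 1 / 1 * 0 ^ e"
      by (intro tendsto_mult tendsto_divide) auto
    moreover have "(0::complex) ^ e = L"
      unfolding L_def e_def using rs by auto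
    ultimately show ?thesis unfolding geq[abs_def] by simp
  qed
  have Lw: "norm (L * w) < 1"
    unfolding L_def using wb by auto
  define c where "c = (1 + norm (L * w)) / 2"
  have c1: "c < 1" and cgt: "norm (L * w) < c" unfolding c_def using Lw by auto
  have "(\<lambda>N. norm (g N * w)) \<longlonglongrightarrow> norm (L * w)"
    by (intro tendsto_intros gL)
  hence "eventually (\<lambda>N. norm (g N * w) < c) sequentially"
    using cgt by (rule order_tendstoD(2))
  then obtain N0 where N0: "\<And>N. N \<ge> N0 \<Longrightarrow> norm (g N * w) < c"
    unfolding eventually_sequentially by blast
  have "summable t"
  proof (rule summable_ratio_test[OF c1])
    fix n assume "n \<ge> N0"
    hence "norm (g n * w) \<le> c" using N0 by fastforce
    thus "norm (t (Suc n)) \<le> c * norm (t n)"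
      unfolding step norm_mult by (metis mult.commute mult_left_mono norm_ge_zero norm_mult)
  qed
  thus ?thesis unfolding t_def[abs_def] .
qed


theorem mainTheorem7:
  fixes m n :: nat
    and r s :: "nat \<Rightarrow> nat"
    and a b :: "nat \<Rightarrow> nat \<Rightarrow> complex"
    and z :: "nat \<Rightarrow> nat \<Rightarrow> complex"
  assumes rs: "\<And>l. 1 \<le> l \<Longrightarrow> l \<le> m \<Longrightarrow> r l \<le> s l + 1"
    and bnz: "\<And>l N i. 1 \<le> l \<Longrightarrow> l \<le> m \<Longrightarrow> 1 \<le> i \<Longrightarrow> i \<le> s l \<Longrightarrow>
                 pochhammer (b i l) N \<noteq> 0"
    and coeff: "\<And>l N. 1 \<le> l \<Longrightarrow> l \<le> m \<Longrightarrow>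
                 nonneg_complex ((\<Prod>i=1..r l. pochhammer (a i l) N) / (\<Prod>i=1..s l. pochhammer (b i l) N))"
    and zbd: "\<And>l j. 1 \<le> l \<Longrightarrow> l \<le> m \<Longrightarrow> s l + 1 = r l \<Longrightarrow> 1 \<le> j \<Longrightarrow> j \<le> n \<Longrightarrow>
                 norm (z j l) < 1"
  shows "psd_matrix n (\<lambda>j k. \<Prod>l=1..m. hypF (r l) (s l) (\<lambda>i. a i l) (\<lambda>i. b i l) (z j l * cnj (z k l)))"
  proof -
  define d where "d l N = (\<Prod>i=1..r l. pochhammer (a i l) N) / (fact N * (\<Prod>i=1..s l. pochhammer (b i l) N))" for l N
  have dnn: "nonneg_complex (d l N)" if lm: "l \<in> {1..m}" for l N
  proof -
    obtain t where t: "t \<ge> 0" "(\<Prod>i=1..r l. pochhammer (a i l) N) / (\<Prod>i=1..s l. pochhammer (b i l) N) = complex_of_real t"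
    proof -
      have "1 \<le> l" "l \<le> m" using lm by auto
      from coeff[OF this, of N] show ?thesis using that unfolding nonneg_complex_iff by blast
    qed
    have "d l N = complex_of_real (t / fact N)"
      unfolding d_def using t(2) by (simp add: field_simps)
    thus ?thesis unfolding nonneg_complex_iff using t(1) by (intro exI[of _ "t / fact N"]) auto
  qed
  show ?thesis
  proof (rule psd_limit)
    fix M
    show "psd_matrix n (\<lambda>j k. \<Prod>l\<in>{1..m}. \<Sum>N<M. d l N * (z j l * cnj (z k l))^N)"
      by (rule psd_partial) (auto intro: dnn)
  next
    fix j k assume j: "j \<in> {1..n}" and k: "k \<in> {1..n}"
    show "(\<lambda>M. \<Prod>l\<in>{1..m}. \<Sum>N<M. d l N * (z j l * cnj (z k l))^N) \<longlonglongrightarrow>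
          (\<Prod>l=1..m. hypF (r l) (s l) (\<lambda>i. a i l) (\<lambda>i. b i l) (z j l * cnj (z k l)))"
    proof (rule tendsto_prod)
      fix l assume l: "l \<in> {1..m}"
      have "summable (\<lambda>N. d l N * (z j l * cnj (z k l))^N)"
        unfolding d_def
      proof (rule hyp_summable)
        show "r l \<le> s l + 1" using rs l by auto
        show "\<And>N i. 1 \<le> i \<Longrightarrow> i \<le> s l \<Longrightarrow> pochhammer (b i l) N \<noteq> 0" using bnz l by auto
        assume "r l = s l + 1"
        hence "norm (z j l) < 1" "norm (z k l) < 1" using zbd l j k by auto
        thus "norm (z j l * cnj (z k l)) < 1"
          by (simp add: norm_mult) (metis mult_strict_mono' norm_ge_zero mult_1_right less_le_trans mult_left_le_one_le less_imp_le)
      qed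
      thus "(\<lambda>M. \<Sum>N<M. d l N * (z j l * cnj (z k l))^N) \<longlonglongrightarrow> hypF (r l) (s l) (\<lambda>i. a i l) (\<lambda>i. b i l) (z j l * cnj (z k l))"
        unfolding hypF_def d_def by (rule summable_LIMSEQ)
    qed
  qed
qed

end
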